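(* Let $k,n\ge1$, let $M=\Gamma(\mathbb Z\,\overrightarrow{\times}\,G,(k,0))$ with $G$ a Dedekind $\sigma$-complete $\ell$-group, let $x$ be an $n$-dimensional observable on $M$ and $F=F_x$. Let $i\in\{1,\ldots,k\}$, $\mathbf s\in T_i$, and $\mathbf t\in\mathbb R^n$ with $\pi_i(\mathbf s)\ll\mathbf t\le\mathbf s$. Then $\mathbf t\in T_i$ and $\mathbf t\approx_i\mathbf s$; moreover $\pi_i(\mathbf s)=\bigwedge\{\mathbf t\in\mathbb R^n\colon\pi_i(\mathbf s)\ll\mathbf t\le\mathbf s\}$ (componentwise infimum in $\mathbb R^n$), and the element $\bigwedge\{F(\mathbf t)\colon\pi_i(\mathbf s)\ll\mathbf t\le\mathbf s\}$ exists in $M$ and belongs to $M_i$.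
   Context: $\mathbb Z\,\overrightarrow{\times}\,G$ is $\mathbb Z\times G$ with lexicographic order; $\Gamma(K,v)=([0,v];\oplus,',0,v)$ with $a\oplus b=(a+b)\wedge v$, $a'=v-a$. Partial addition on $M$: $a+b$ defined iff the group sum is $\le(k,0)$. Summable sequence: every finite subfamily has a sum; its sum is the supremum of finite partial sums. An $n$-dimensional observable is $x:\mathcal B(\mathbb R^n)\to M$ with $x(\mathbb R^n)=1$ and $x(\bigcup A_m)=\sum_m x(A_m)$ (summable) for pairwise disjoint Borel $A_m$. $F_x(s_1,\ldots,s_n)=x((-\infty,s_1)\times\cdots\times(-\infty,s_n))$. $M_j=\{(j,g)\in M\}$, $T_j=\{\mathbf s\colon F(\mathbf s)\in M_j\}$. For $\mathbf s\in T_i$ ($i\ge1$), $\pi^i_j(\mathbf s)=\inf\{r\colon(s_1,\ldots,s_{j-1},r,s_{j+1},\ldots,s_n)\in T_i\}$, $\pi_i(\mathbf s)=(\pi^i_1(\mathbf s),\ldots,\pi^i_n(\mathbf s))$ (characteristic point associated to $\mathbf s$). For $\mathbf s,\mathbf t\in T_i$, $\mathbf s\approx_i\mathbf t$ iff $\pi_i(\mathbf s)=\pi_i(\mathbf t)$. $\mathbf a\le\mathbf b$ means $a_j\le b_j$ for all $j$; $\mathbf a\ll\mathbf b$ means $a_j<b_j$ for all $j$. *)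

theory Defs
  imports "HOL-Analysis.Analysis" "HOL-Library.Lattice_Algebras"
begin

definition lexle :: "int \<times> 'g::ord \<Rightarrow> int \<times> 'g \<Rightarrow> bool" where
  "lexle a b \<longleftrightarrow> fst a < fst b \<or> (fst a = fst b \<and> snd a \<le> snd b)"

definition Gamma :: "int \<Rightarrow> (int \<times> 'g::{ord,zero}) set" where
  "Gamma k = {a. lexle (0,0) a \<and> lexle a (k,0)}"

definition lex_sup_in :: "(int \<times> 'g::ord) set \<Rightarrow> (int \<times> 'g) set \<Rightarrow> int \<times> 'g \<Rightarrow> bool" where
  "lex_sup_in M S s \<longleftrightarrow> s \<in> M \<and> (\<forall>a\<in>S. lexle a s) \<and>
      (\<forall>u\<in>M. (\<forall>a\<in>S. lexle a u) \<longrightarrow> lexle s u)"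

definition lex_inf_in :: "(int \<times> 'g::ord) set \<Rightarrow> (int \<times> 'g) set \<Rightarrow> int \<times> 'g \<Rightarrow> bool" where
  "lex_inf_in M S s \<longleftrightarrow> s \<in> M \<and> (\<forall>a\<in>S. lexle s a) \<and>
      (\<forall>u\<in>M. (\<forall>a\<in>S. lexle u a) \<longrightarrow> lexle u s)"

definition dedekind_sigma_complete :: "'g::lattice_ab_group_add itself \<Rightarrow> bool" where
  "dedekind_sigma_complete _ \<longleftrightarrow>
     (\<forall>S::'g set. S \<noteq> {} \<and> countable S \<and> bdd_above S \<longrightarrow>
        (\<exists>s. (\<forall>a\<in>S. a \<le> s) \<and> (\<forall>u. (\<forall>a\<in>S. a \<le> u) \<longrightarrow> s \<le> u)))"

definition psum :: "(nat \<Rightarrow> int \<times> 'g::comm_monoid_add) \<Rightarrow> nat set \<Rightarrow> int \<times> 'g" where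
  "psum a F = (\<Sum>i\<in>F. fst (a i), \<Sum>i\<in>F. snd (a i))"

(* summable in M: every finite subfamily has a sum in M (partial addition) *)
definition M_summable :: "int \<Rightarrow> (nat \<Rightarrow> int \<times> 'g::{comm_monoid_add,ord}) \<Rightarrow> bool" where
  "M_summable k a \<longleftrightarrow> (\<forall>F. finite F \<longrightarrow> psum a F \<in> Gamma k)"

definition M_sum_is :: "int \<Rightarrow> (nat \<Rightarrow> int \<times> 'g::{comm_monoid_add,ord}) \<Rightarrow> int \<times> 'g \<Rightarrow> bool" where
  "M_sum_is k a s \<longleftrightarrow> lex_sup_in (Gamma k) {psum a F | F. finite F} s"

(* n-dimensional observable on M = Gamma(Z lex G,(k,0)); n = CARD('n) *)
definition observable :: "int \<Rightarrow> ((real^'n) set \<Rightarrow> int \<times> 'g::lattice_ab_group_add) \<Rightarrow> bool" where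
  "observable k x \<longleftrightarrow>
     (\<forall>A\<in>sets borel. x A \<in> Gamma k) \<and>
     x UNIV = (k, 0) \<and>
     (\<forall>A::nat \<Rightarrow> (real^'n) set. range A \<subseteq> sets borel \<and> disjoint_family A \<longrightarrow>
        M_summable k (x \<circ> A) \<and> M_sum_is k (x \<circ> A) (x (\<Union>m. A m)))"

definition distrF :: "((real^'n) set \<Rightarrow> 'b) \<Rightarrow> real^'n \<Rightarrow> 'b" where
  "distrF x s = x {y. \<forall>j. y $ j < s $ j}"

definition Mset :: "int \<Rightarrow> int \<Rightarrow> (int \<times> 'g::{ord,zero}) set" where
  "Mset k j = {a \<in> Gamma k. fst a = j}"

definition Tset :: "int \<Rightarrow> ((real^'n) set \<Rightarrow> int \<times> 'g::{ord,zero}) \<Rightarrow> int \<Rightarrow> (real^'n) set" where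
  "Tset k x j = {s. distrF x s \<in> Mset k j}"

definition pi_comp :: "int \<Rightarrow> ((real^'n) set \<Rightarrow> int \<times> 'g::{ord,zero}) \<Rightarrow> int \<Rightarrow> real^'n \<Rightarrow> 'n \<Rightarrow> real" where
  "pi_comp k x i s j = Inf {r. (\<chi> l. if l = j then r else s $ l) \<in> Tset k x i}"

definition char_point :: "int \<Rightarrow> ((real^'n) set \<Rightarrow> int \<times> 'g::{ord,zero}) \<Rightarrow> int \<Rightarrow> real^'n \<Rightarrow> real^'n" where
  "char_point k x i s = (\<chi> j. pi_comp k x i s j)"

definition approx_i :: "int \<Rightarrow> ((real^'n) set \<Rightarrow> int \<times> 'g::{ord,zero}) \<Rightarrow> int \<Rightarrow> real^'n \<Rightarrow> real^'n \<Rightarrow> bool" where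
  "approx_i k x i s t \<longleftrightarrow> s \<in> Tset k x i \<and> t \<in> Tset k x i \<and> char_point k x i s = char_point k x i t"

definition vle :: "real^'n \<Rightarrow> real^'n \<Rightarrow> bool" where
  "vle a b \<longleftrightarrow> (\<forall>j. a $ j \<le> b $ j)"

definition vll :: "real^'n \<Rightarrow> real^'n \<Rightarrow> bool" where
  "vll a b \<longleftrightarrow> (\<forall>j. a $ j < b $ j)"

definition is_vinf :: "(real^'n) set \<Rightarrow> real^'n \<Rightarrow> bool" where
  "is_vinf S p \<longleftrightarrow> (\<forall>t\<in>S. vle p t) \<and> (\<forall>q. (\<forall>t\<in>S. vle q t) \<longrightarrow> vle q p)"

end

theory Submission
  imports Defs
begin



lemma psum_eq: "psum a F = sum a F"
  by (simp add: psum_def prod_eq_iff fst_sum snd_sum)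

lemma lexle_refl: "lexle a (a::int \<times> 'g::order)" by (simp add: lexle_def)
lemma lexle_trans: "lexle a b \<Longrightarrow> lexle b c \<Longrightarrow> lexle a (c::int \<times> 'g::order)"
  by (auto simp: lexle_def)
lemma lexle_antisym: "lexle a b \<Longrightarrow> lexle b a \<Longrightarrow> a = (b::int \<times> 'g::order)"
  by (auto simp: lexle_def prod_eq_iff)
lemma lexle_add: "lexle a b \<Longrightarrow> lexle c d \<Longrightarrow> lexle (a + c) (b + (d::int \<times> 'g::ordered_ab_group_add))"
  by (auto simp: lexle_def add_mono)
lemma lexle_cancel: "lexle (a + c) (b + c) \<longleftrightarrow> lexle a (b::int \<times> 'g::ordered_ab_group_add)"
  by (auto simp: lexle_def)
lemma lexle_fst: "lexle a b \<Longrightarrow> fst a \<le> fst b" by (auto simp: lexle_def)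

lemma lexle_sum_nonneg:
  fixes a :: "'i \<Rightarrow> int \<times> 'g::ordered_ab_group_add"
  shows "(\<And>l. l \<in> F \<Longrightarrow> lexle 0 (a l)) \<Longrightarrow> lexle 0 (sum a F)"
proof (induction F rule: infinite_finite_induct)
  case (infinite A) then show ?case by (simp add: lexle_refl)
next
  case empty then show ?case by (simp add: lexle_refl)
next
  case (insert y F)
  then show ?case using lexle_add[of 0 "a y" 0 "sum a F"] by simp
qed

lemma lexle_sum_mono:
  fixes a :: "'i \<Rightarrow> int \<times> 'g::ordered_ab_group_add"
  assumes "finite G" "F \<subseteq> G" "\<And>l. l \<in> G \<Longrightarrow> lexle 0 (a l)"
  shows "lexle (sum a F) (sum a G)"
proof -
  have "sum a G = sum a (G - F) + sum a F" using sum.subset_diff[OF assms(2,1)] .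
  moreover have "lexle 0 (sum a (G - F))" using assms(3) by (intro lexle_sum_nonneg) auto
  ultimately show ?thesis using lexle_add[of 0 "sum a (G - F)" "sum a F" "sum a F"]
    by (simp add: lexle_refl)
qed

lemma sup_max: "lex_sup_in M S s \<Longrightarrow> m \<in> S \<Longrightarrow> (\<forall>a\<in>S. lexle a m) \<Longrightarrow> m \<in> M \<Longrightarrow> s = (m::int \<times> 'g::order)"
  unfolding lex_sup_in_def by (meson lexle_antisym)

definition orth :: "real^'n \<Rightarrow> (real^'n) set" where
  "orth v = {y. \<forall>j. y$j < v$j}"

definition upd :: "real^'n \<Rightarrow> 'n \<Rightarrow> real \<Rightarrow> real^'n" where
  "upd v j r = (\<chi> l. if l = j then r else v$l)"

lemma open_orth: "open (orth v)"
proof -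
  have "orth v = (\<Inter>j\<in>UNIV. {y. y$j < v$j})" by (auto simp: orth_def)
  then show ?thesis by (simp add: open_INT open_halfspace_component_lt_cart)
qed

lemma borel_orth: "orth v \<in> sets borel" by (simp add: open_orth)

lemma closed_corth: "closed {y::real^'n. \<forall>j. y$j \<le> v$j}"
proof -
  have "{y::real^'n. \<forall>j. y$j \<le> v$j} = (\<Inter>j. {y. y$j \<le> v$j})" by auto
  then show ?thesis by (simp add: closed_INT closed_halfspace_component_le_cart)
qed

lemma upd_nth: "upd v j r $ l = (if l = j then r else v $ l)" by (simp add: upd_def)
lemma upd_same: "upd v j (v$j) = v" by (simp add: upd_def vec_eq_iff)

locale obsv =
  fixes k :: int and x :: "(real^'n) set \<Rightarrow> int \<times> 'g::lattice_ab_group_add"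
  assumes obs: "observable k x"
begin

lemma xG: "A \<in> sets borel \<Longrightarrow> x A \<in> Gamma k"
  using obs by (auto simp: observable_def)

lemma xnn: "A \<in> sets borel \<Longrightarrow> lexle 0 (x A)"
  using xG by (simp add: Gamma_def zero_prod_def)

lemma xle: "A \<in> sets borel \<Longrightarrow> lexle (x A) (k, 0)"
  using xG by (simp add: Gamma_def)

lemma ctbl: "range A \<subseteq> sets borel \<Longrightarrow> disjoint_family A \<Longrightarrow>
   M_summable k (x \<circ> A) \<and> M_sum_is k (x \<circ> A) (x (\<Union>m. A m))"
  using obs by (auto simp: observable_def)

lemma x_empty: "x {} = 0"
proof -
  let ?A = "\<lambda>m::nat. {} :: (real^'n) set"
  have "M_sum_is k (x \<circ> ?A) (x (\<Union>m. ?A m))"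
    using ctbl[of ?A] by (auto simp: disjoint_family_on_def)
  then have s: "lex_sup_in (Gamma k) {psum (x \<circ> ?A) F | F. finite F} (x {})"
    by (simp add: M_sum_is_def)
  have "psum (x \<circ> ?A) {0,1} = x {} + x {}" by (simp add: psum_eq)
  then have "lexle (x {} + x {}) (x {})" using s unfolding lex_sup_in_def
    by (metis (mono_tags, lifting) finite.emptyI finite.insertI mem_Collect_eq)
  then have "lexle (x {} + x {}) (0 + x {})" by simp
  then have "lexle (x {}) 0" using lexle_cancel by blast
  then show ?thesis using xnn[of "{}"] lexle_antisym[of "x {}" 0] by simp
qed

lemma x_union: assumes "A \<in> sets borel" "B \<in> sets borel" "A \<inter> B = {}"
  shows "x (A \<union> B) = x A + x B"
proof -
  define f where "f = (\<lambda>m::nat. if m = 0 then A else if m = 1 then B else {})"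
  have r: "range f \<subseteq> sets borel" using assms by (auto simp: f_def)
  have d: "disjoint_family f" using assms(3) by (auto simp: disjoint_family_on_def f_def)
  have u: "(\<Union>m. f m) = A \<union> B"
  proof
    show "(\<Union>m. f m) \<subseteq> A \<union> B" by (auto simp: f_def split: if_splits)
    show "A \<union> B \<subseteq> (\<Union>m. f m)"
    proof -
      have "A = f 0" "B = f 1" by (auto simp: f_def)
      then show ?thesis by blast
    qed
  qed
  have sm: "M_summable k (x \<circ> f)" and si: "M_sum_is k (x \<circ> f) (x (A \<union> B))"
    using ctbl[OF r d] u by auto
  have nn: "\<And>l. lexle 0 ((x \<circ> f) l)" using r xnn by auto
  have e01: "psum (x \<circ> f) {0,1} = x A + x B" by (simp add: psum_eq f_def)
  show ?thesis
  proof (rule sup_max)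
    show "lex_sup_in (Gamma k) {psum (x \<circ> f) F | F. finite F} (x (A \<union> B))"
      using si by (simp add: M_sum_is_def)
    show "x A + x B \<in> {psum (x \<circ> f) F | F. finite F}" using e01[symmetric] by blast
    show "x A + x B \<in> Gamma k" using sm e01 unfolding M_summable_def by (metis finite.emptyI finite.insertI)
    show "\<forall>a\<in>{psum (x \<circ> f) F | F. finite F}. lexle a (x A + x B)"
    proof
      fix a assume "a \<in> {psum (x \<circ> f) F | F. finite F}"
      then obtain F where fF: "finite F" and aF: "a = psum (x \<circ> f) F" by blast
      have "lexle (sum (x \<circ> f) F) (sum (x \<circ> f) (F \<union> {0,1}))"
        using fF nn by (intro lexle_sum_mono) auto
      moreover have "sum (x \<circ> f) (F \<union> {0,1}) = sum (x \<circ> f) {0,1}"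
        using fF by (intro sum.mono_neutral_right) (auto simp: f_def x_empty)
      ultimately show "lexle a (x A + x B)" using e01 aF by (simp add: psum_eq)
    qed
  qed
qed

lemma x_mono_eq: "A \<subseteq> B \<Longrightarrow> A \<in> sets borel \<Longrightarrow> B \<in> sets borel \<Longrightarrow> x B = x A + x (B - A)"
proof -
  assume a: "A \<subseteq> B" "A \<in> sets borel" "B \<in> sets borel"
  have "A \<union> (B - A) = B" using a by auto
  then show ?thesis using x_union[of A "B - A"] a by (simp add: sets.Diff)
qed

lemma x_mono: "A \<subseteq> B \<Longrightarrow> A \<in> sets borel \<Longrightarrow> B \<in> sets borel \<Longrightarrow> lexle (x A) (x B)"
  using x_mono_eq[of A B] xnn[of "B - A"] lexle_add[of "x A" "x A" 0 "x (B - A)"]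
  by (simp add: lexle_refl sets.Diff)

lemma mu_diff: "A \<subseteq> B \<Longrightarrow> A \<in> sets borel \<Longrightarrow> B \<in> sets borel \<Longrightarrow> fst (x (B - A)) = fst (x B) - fst (x A)"
  using x_mono_eq[of A B] by simp

lemma mu_nn: "A \<in> sets borel \<Longrightarrow> 0 \<le> fst (x A)"
  using lexle_fst[OF xnn] by simp

lemma mu_mono: "A \<subseteq> B \<Longrightarrow> A \<in> sets borel \<Longrightarrow> B \<in> sets borel \<Longrightarrow> fst (x A) \<le> fst (x B)"
  using lexle_fst[OF x_mono] by blast

lemma null_union: "finite J \<Longrightarrow> (\<And>j. j \<in> J \<Longrightarrow> N j \<in> sets borel \<and> fst (x (N j)) = 0) \<Longrightarrow>
   fst (x (\<Union>j\<in>J. N j)) = 0"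
proof (induction J rule: finite_induct)
  case empty then show ?case by (simp add: x_empty)
next
  case (insert j J)
  let ?U = "\<Union>j\<in>J. N j"
  have U: "?U \<in> sets borel" using insert by auto
  have Nj: "N j \<in> sets borel" "fst (x (N j)) = 0" using insert by auto
  have "(\<Union>j\<in>insert j J. N j) = ?U \<union> (N j - ?U)" by auto
  then have "x (\<Union>j\<in>insert j J. N j) = x ?U + x (N j - ?U)"
    using x_union[of ?U "N j - ?U"] U Nj by (simp add: sets.Diff)
  moreover have "fst (x (N j - ?U)) \<le> 0" using mu_mono[of "N j - ?U" "N j"] Nj U by (auto simp: sets.Diff)
  moreover have "0 \<le> fst (x (N j - ?U))" using mu_nn Nj U by (simp add: sets.Diff)
  ultimately show ?case using insert by simp
qed

lemma null_cover: fixes N :: "'n \<Rightarrow> (real^'n) set" assumes "P \<subseteq> Q" "P \<in> sets borel" "Q \<in> sets borel"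
  "Q - P \<subseteq> (\<Union>j. N j)" "\<And>j. N j \<in> sets borel" "\<And>j. fst (x (N j)) = 0"
  shows "fst (x P) = fst (x (Q::(real^'n) set))"
proof -
  have "fst (x (\<Union>j\<in>(UNIV::'n set). N j)) = 0" using assms by (intro null_union) auto
  moreover have "fst (x (Q - P)) \<le> fst (x (\<Union>j. N j))"
    using assms by (intro mu_mono) (auto simp: sets.Diff)
  moreover have "0 \<le> fst (x (Q - P))" using assms mu_nn by (simp add: sets.Diff)
  ultimately show ?thesis using mu_diff[OF assms(1-3)] by simp
qed

end


context obsv begin

lemma evfst:
  fixes E :: "nat \<Rightarrow> (real^'n) set"
  assumes r: "range E \<subseteq> sets borel" and d: "disjoint_family E"
  shows "\<exists>N. \<forall>m\<ge>N. fst (sum (x \<circ> E) {..<m}) = fst (x (\<Union>l. E l))"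
proof -
  let ?a = "x \<circ> E" let ?S = "x (\<Union>l. E l)"
  define P where "P m = sum ?a {..<m}" for m
  have sm: "M_summable k ?a" and si: "M_sum_is k ?a ?S" using ctbl[OF r d] by auto
  have nn: "\<And>l. lexle 0 (?a l)" using r xnn by auto
  have PG: "\<And>m. P m \<in> Gamma k" using sm by (simp add: M_summable_def psum_eq P_def)
  have ub: "\<And>F. finite F \<Longrightarrow> lexle (sum ?a F) ?S"
    using si unfolding M_sum_is_def lex_sup_in_def psum_eq by blast
  have least: "\<And>u. u \<in> Gamma k \<Longrightarrow> (\<And>F. finite F \<Longrightarrow> lexle (sum ?a F) u) \<Longrightarrow> lexle ?S u"
    using si unfolding M_sum_is_def lex_sup_in_def psum_eq by blast
  have Pmono: "\<And>m m'. m \<le> m' \<Longrightarrow> lexle (P m) (P m')"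
    unfolding P_def using nn by (intro lexle_sum_mono) auto
  have SG: "?S \<in> Gamma k" using xG r by auto
  have Pfst: "\<And>m. fst (P m) \<in> {0..k}"
  proof -
    fix m have "lexle (0,0) (P m)" "lexle (P m) (k,0)" using PG[of m] by (auto simp: Gamma_def)
    then show "fst (P m) \<in> {0..k}" using lexle_fst[of "(0,0)" "P m"] lexle_fst[of "P m" "(k,0)"] by simp
  qed
  define Rg where "Rg = range (\<lambda>m. fst (P m))"
  have fin: "finite Rg" using Pfst by (auto simp: Rg_def intro: finite_subset[of _ "{0..k}"])
  define b where "b = Max Rg"
  obtain N where bN: "fst (P N) = b" using Max_in[OF fin] by (auto simp: b_def Rg_def)
  have bm: "\<And>m. m \<ge> N \<Longrightarrow> fst (P m) = b"
  proof -
    fix m assume "m \<ge> N"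
    then have "b \<le> fst (P m)" using Pmono lexle_fst bN by metis
    moreover have "fst (P m) \<le> b" using fin by (auto simp: b_def Rg_def)
    ultimately show "fst (P m) = b" by simp
  qed
  have bound: "\<And>F. finite F \<Longrightarrow> \<exists>m\<ge>N. lexle (sum ?a F) (P m)"
  proof -
    fix F :: "nat set" assume "finite F"
    then obtain m where "F \<subseteq> {..<m}" using finite_nat_bounded by blast
    then have "F \<subseteq> {..<max m N}" by auto
    then have "lexle (sum ?a F) (P (max m N))" unfolding P_def using nn by (intro lexle_sum_mono) auto
    then show "\<exists>m\<ge>N. lexle (sum ?a F) (P m)" by (intro exI[of _ "max m N"]) auto
  qed
  have "b \<le> fst ?S" using lexle_fst[OF ub[of "{..<N}"]] bN by (simp add: P_def)
  moreover have "\<not> b < fst ?S"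
  proof
    assume lt: "b < fst ?S"
    have b0: "0 \<le> b" using Pfst bN by force
    have Sk: "lexle ?S (k,0)" using SG by (simp add: Gamma_def)
    show False
    proof (cases "\<exists>h. \<forall>m\<ge>N. snd (P m) \<le> h")
      case True
      then obtain h where h: "\<And>m. m \<ge> N \<Longrightarrow> snd (P m) \<le> h" by blast
      have "(b,h) \<in> Gamma k"
      proof -
        have "lexle (0,0) (P N)" using PG by (simp add: Gamma_def)
        then have "b > 0 \<or> (b = 0 \<and> 0 \<le> h)" using h[of N] b0 bN by (auto simp: lexle_def intro: order_trans)
        moreover have "b < k" using lt Sk by (auto simp: lexle_def)
        ultimately show ?thesis by (auto simp: Gamma_def lexle_def)
      qed
      moreover have "\<And>F. finite F \<Longrightarrow> lexle (sum ?a F) (b,h)"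
      proof -
        fix F :: "nat set" assume "finite F"
        then obtain m where "m \<ge> N" "lexle (sum ?a F) (P m)" using bound by blast
        moreover have "lexle (P m) (b,h)" using bm[OF \<open>m\<ge>N\<close>] h[OF \<open>m\<ge>N\<close>] by (simp add: lexle_def)
        ultimately show "lexle (sum ?a F) (b,h)" using lexle_trans by blast
      qed
      ultimately have "lexle ?S (b,h)" using least by blast
      then show False using lt by (auto simp: lexle_def)
    next
      case False
      then obtain m where m: "m \<ge> N" "\<not> snd (P m) \<le> 0" by blast
      define d where "d = sup (snd (P m)) 0"
      have d0: "0 \<le> d" by (simp add: d_def)
      have dn: "d \<noteq> 0" using m(2) by (metis d_def sup_ge1)
      define U where "U = (fst ?S, snd ?S - d)"
      have "U \<in> Gamma k"
      proof -
        have "lexle (0,0) U" using lt b0 by (simp add: U_def lexle_def)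
        moreover have "lexle U (k,0)"
        proof (cases "fst ?S < k")
          case True then show ?thesis by (simp add: U_def lexle_def)
        next
          case False
          then have "fst ?S = k" "snd ?S \<le> 0" using Sk by (auto simp: lexle_def)
          then show ?thesis using d0 by (auto simp: U_def lexle_def diff_le_eq intro: order_trans)
        qed
        ultimately show ?thesis by (simp add: Gamma_def)
      qed
      moreover have "\<And>F. finite F \<Longrightarrow> lexle (sum ?a F) U"
      proof -
        fix F :: "nat set" assume "finite F"
        then obtain m' where "m' \<ge> N" "lexle (sum ?a F) (P m')" using bound by blast
        moreover have "lexle (P m') U" using bm[OF \<open>m'\<ge>N\<close>] lt by (simp add: U_def lexle_def)
        ultimately show "lexle (sum ?a F) U" using lexle_trans by blast
      qed
      ultimately have "lexle ?S U" using least by blast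
      then have "snd ?S \<le> snd ?S - d" by (simp add: U_def lexle_def)
      then have "d \<le> 0" by (simp add: le_diff_eq)
      then show False using d0 dn by simp
    qed
  qed
  ultimately have "fst ?S = b" by simp
  then show ?thesis using bm unfolding P_def by auto
qed

end


lemma L1: "lexle w (c + d) \<Longrightarrow> lexle p (c + (p + d) - (w:: int \<times> 'g::ordered_ab_group_add))"
  by (auto simp: lexle_def algebra_simps le_diff_eq)
lemma L2: "lexle 0 w \<Longrightarrow> lexle (a - w) (a:: int \<times> 'g::ordered_ab_group_add)"
  by (auto simp: lexle_def algebra_simps diff_le_eq)
lemma L3: "lexle d (c + d - w) \<Longrightarrow> lexle w (c:: int \<times> 'g::ordered_ab_group_add)"
  by (auto simp: lexle_def algebra_simps le_diff_eq)

lemma Inf_lower_part: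
  fixes A :: "real set"
  assumes "c \<in> A" "bdd_below A"
  shows "Inf A = Inf (A \<inter> {..c})"
proof (rule antisym)
  show "Inf A \<le> Inf (A \<inter> {..c})" using assms by (intro cInf_superset_mono) auto
  show "Inf (A \<inter> {..c}) \<le> Inf A"
  proof (rule cInf_greatest)
    show "A \<noteq> {}" using assms by auto
    fix a assume a: "a \<in> A"
    have bb: "bdd_below (A \<inter> {..c})" using assms(2) by (meson bdd_below_Int1)
    show "Inf (A \<inter> {..c}) \<le> a"
    proof (cases "a \<le> c")
      case True then show ?thesis using a bb by (intro cInf_lower) auto
    next
      case False
      have "Inf (A \<inter> {..c}) \<le> c" using assms bb by (intro cInf_lower) auto
      then show ?thesis using False by simp
    qed
  qed
qed

lemma Inf_eq_lower:
  fixes A B :: "real set"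
  assumes cA: "c \<in> A" and cB: "c \<in> B" and eq: "\<And>r. r \<le> c \<Longrightarrow> r \<in> A \<longleftrightarrow> r \<in> B"
  shows "Inf A = Inf B"
proof -
  have AB: "A \<inter> {..c} = B \<inter> {..c}" using eq by auto
  have bdd: "bdd_below A \<longleftrightarrow> bdd_below B"
  proof -
    have *: "bdd_below Y" if bX: "bdd_below X" and eXY: "\<forall>r\<le>c. r \<in> X \<longleftrightarrow> r \<in> Y" for X Y :: "real set"
    proof -
      obtain l where l: "\<And>a. a \<in> X \<Longrightarrow> l \<le> a" using bX by (auto simp: bdd_below_def)
      have "min l c \<le> b" if "b \<in> Y" for b
      proof (cases "b \<le> c")
        case True then show ?thesis using eXY \<open>b \<in> Y\<close> l by fastforce
      next
        case False then show ?thesis by simp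
      qed
      then show ?thesis by (auto simp: bdd_below_def)
    qed
    have e2: "\<And>r. r \<le> c \<Longrightarrow> r \<in> B \<longleftrightarrow> r \<in> A" using eq by blast
    have "\<forall>r\<le>c. r \<in> A \<longleftrightarrow> r \<in> B" "\<forall>r\<le>c. r \<in> B \<longleftrightarrow> r \<in> A" using eq by auto
    then show ?thesis using *[of A B] *[of B A] by (metis (no_types))
  qed
  show ?thesis
  proof (cases "bdd_below A")
    case True
    then show ?thesis using Inf_lower_part[OF cA] Inf_lower_part[OF cB] bdd AB by simp
  next
    case False
    have nb: "\<not> bdd_below X \<Longrightarrow> (\<lambda>z. \<forall>y\<in>uminus ` X. y \<le> z) = (\<lambda>z. False)" for X :: "real set"
    proof -
      assume nX: "\<not> bdd_below X"
      show ?thesis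
      proof (rule ext)
        fix z
        show "(\<forall>y\<in>uminus ` X. y \<le> z) = False"
        proof -
          have "\<not> (\<forall>a\<in>X. - z \<le> a)" using nX by (auto simp: bdd_below_def)
          then show ?thesis by force
        qed
      qed
    qed
    have "\<not> bdd_below B" using False bdd by simp
    then show ?thesis using nb[OF False] nb[of B] by (simp add: Inf_real_def Sup_real_def)
  qed
qed

lemma orth_mono: "vle u v \<Longrightarrow> orth u \<subseteq> orth v"
  unfolding orth_def vle_def using less_le_trans by blast

lemma vle_upd: "r \<le> c \<Longrightarrow> vle (upd v j r) (upd v j c)"
  by (simp add: vle_def upd_nth)

lemma vle_upd_le: "c \<le> v$j \<Longrightarrow> vle (upd v j c) v"
  by (simp add: vle_def upd_nth)

context obsv begin

lemma inT: "v \<in> Tset k x i \<longleftrightarrow> fst (x (orth v)) = i"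
  using xG[OF borel_orth[of v]] by (simp add: Tset_def Mset_def distrF_def orth_def)

lemma pic: "char_point k x i s $ j = Inf {r. upd s j r \<in> Tset k x i}"
  by (simp add: char_point_def pi_comp_def upd_def)

lemma stepA:
  assumes sT: "s \<in> Tset k x i" and pc: "char_point k x i s $ j < c" and cs: "c \<le> s$j"
  shows "upd s j c \<in> Tset k x i"
proof -
  let ?R = "{r. upd s j r \<in> Tset k x i}"
  have "s$j \<in> ?R" using sT by (simp add: upd_same)
  then obtain r where r: "r \<in> ?R" "r < c" using cInf_lessD[of ?R c] pc pic by auto
  have "fst (x (orth (upd s j r))) \<le> fst (x (orth (upd s j c)))"
    using r by (intro mu_mono orth_mono vle_upd borel_orth) auto
  moreover have "fst (x (orth (upd s j c))) \<le> fst (x (orth s))"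
    using cs by (intro mu_mono orth_mono vle_upd_le borel_orth) auto
  ultimately show ?thesis using r sT inT by auto
qed

lemma null_N:
  assumes sT: "s \<in> Tset k x i" and pu: "vll (char_point k x i s) u" and us: "vle u s"
  shows "fst (x (orth s - orth (upd s l (u$l)))) = 0"
proof -
  have "upd s l (u$l) \<in> Tset k x i" using stepA[OF sT] pu us by (auto simp: vll_def vle_def)
  moreover have "orth (upd s l (u$l)) \<subseteq> orth s" using us by (intro orth_mono vle_upd_le) (simp add: vle_def)
  ultimately show ?thesis using mu_diff[of "orth (upd s l (u$l))" "orth s"] sT inT
    by (simp add: borel_orth)
qed

lemma inT_below:
  assumes sT: "s \<in> Tset k x i" and pu: "vll (char_point k x i s) u" and us: "vle u s"
  shows "u \<in> Tset k x i"
proof -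
  have "fst (x (orth u)) = fst (x (orth s))"
  proof (rule null_cover[where N = "\<lambda>l. orth s - orth (upd s l (u$l))"])
    show "orth u \<subseteq> orth s" using us by (rule orth_mono)
    show "orth s - orth u \<subseteq> (\<Union>l. orth s - orth (upd s l (u $ l)))"
    proof
      fix y assume y: "y \<in> orth s - orth u"
      then obtain l where "\<not> y$l < u$l" by (auto simp: orth_def)
      then have "y \<notin> orth (upd s l (u$l))" by (auto simp: orth_def upd_nth)
      then show "y \<in> (\<Union>l. orth s - orth (upd s l (u $ l)))" using y by blast
    qed
    show "\<And>l. fst (x (orth s - orth (upd s l (u $ l)))) = 0" using null_N[OF assms] .
  qed (auto simp: borel_orth sets.Diff)
  then show ?thesis using sT inT by simp
qed

lemma approx_part:
  assumes sT: "s \<in> Tset k x i" and pt: "vll (char_point k x i s) t" and ts: "vle t s"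
  shows "char_point k x i t = char_point k x i s"
proof -
  have tT: "t \<in> Tset k x i" using inT_below[OF assms] .
  have "char_point k x i t $ j = char_point k x i s $ j" for j
    unfolding pic
  proof (rule Inf_eq_lower[where c = "t$j"])
    show "t$j \<in> {r. upd t j r \<in> Tset k x i}" using tT by (simp add: upd_same)
    show "t$j \<in> {r. upd s j r \<in> Tset k x i}" using stepA[OF sT] pt ts by (auto simp: vll_def vle_def)
    fix r assume rt: "r \<le> t$j"
    have "fst (x (orth (upd t j r))) = fst (x (orth (upd s j r)))"
    proof (rule null_cover[where N = "\<lambda>l. orth s - orth (upd s l (t$l))"])
      show "orth (upd t j r) \<subseteq> orth (upd s j r)" using ts by (intro orth_mono) (simp add: vle_def upd_nth)
      show "orth (upd s j r) - orth (upd t j r) \<subseteq> (\<Union>l. orth s - orth (upd s l (t $ l)))"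
      proof
        fix y assume y: "y \<in> orth (upd s j r) - orth (upd t j r)"
        then obtain l where l: "\<not> y$l < upd t j r $ l" by (auto simp: orth_def)
        have ys: "\<forall>l'. y$l' < upd s j r $ l'" using y by (auto simp: orth_def)
        then have "l \<noteq> j" using l by (metis upd_nth)
        then have "\<not> y$l < t$l" using l by (simp add: upd_nth)
        then have "y \<notin> orth (upd s l (t$l))" by (auto simp: orth_def upd_nth)
        moreover have "y \<in> orth s"
        proof -
          have "y$l' < s$l'" for l'
            using ys[rule_format, of l'] rt ts by (auto simp: upd_nth vle_def split: if_splits intro: less_le_trans)
          then show ?thesis by (simp add: orth_def)
        qed
        ultimately show "y \<in> (\<Union>l. orth s - orth (upd s l (t $ l)))" by blast
      qed
      show "\<And>l. fst (x (orth s - orth (upd s l (t $ l)))) = 0" using null_N[OF assms] .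
    qed (auto simp: borel_orth sets.Diff)
    then show "r \<in> {r. upd t j r \<in> Tset k x i} \<longleftrightarrow> r \<in> {r. upd s j r \<in> Tset k x i}"
      by (simp add: inT)
  qed
  then show ?thesis by (simp add: vec_eq_iff)
qed

end



lemma vinf_part:
  fixes p t s :: "real^'n"
  assumes pt: "vll p t" and ts: "vle t s"
  shows "is_vinf {u. vll p u \<and> vle u s} p"
  unfolding is_vinf_def
proof safe
  fix u assume "vll p u" then show "vle p u" by (auto simp: vll_def vle_def less_imp_le)
next
  fix q assume q: "\<forall>u\<in>{u. vll p u \<and> vle u s}. vle q u"
  show "vle q p" unfolding vle_def
  proof
    fix j show "q$j \<le> p$j"
    proof (rule ccontr)
      assume "\<not> q$j \<le> p$j"
      then have qp: "p$j < q$j" by simp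
      define c where "c = (p$j + min (q$j) (t$j)) / 2"
      have c1: "p$j < c" "c < q$j" "c < t$j" using qp pt by (auto simp: c_def vll_def min_def)
      have "vll p (upd t j c)" using pt c1 by (auto simp: vll_def upd_nth)
      moreover have "vle (upd t j c) s" using ts c1 unfolding vle_def upd_nth by (smt (verit))
      ultimately have "vle q (upd t j c)" using q by auto
      then have "q$j \<le> c" by (auto simp: vle_def upd_nth dest: spec[of _ j])
      then show False using c1 by simp
    qed
  qed
qed

context obsv begin

lemma inf_part:
  assumes sT: "s \<in> Tset k x i" and pt0: "vll (char_point k x i s) t" and ts: "vle t s"
  shows "\<exists>m. lex_inf_in (Gamma k) (distrF x ` {u. vll (char_point k x i s) u \<and> vle u s}) m \<and> m \<in> Mset k i"
proof -
  define p where "p = char_point k x i s"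
  have pt: "vll p t" using pt0 by (simp add: p_def)
  define C where "C = {y::real^'n. \<forall>j. y$j \<le> p$j}"
  define u where "u m = (\<chi> j. p$j + (t$j - p$j) / (real m + 1))" for m :: nat
  define D where "D m = orth (u m) - C" for m
  define E where "E l = D l - D (Suc l)" for l
  have Cb: "C \<in> sets borel" using closed_corth by (simp add: C_def borel_closed)
  have Db: "\<And>m. D m \<in> sets borel" unfolding D_def using Cb borel_orth by (intro sets.Diff) auto
  have Eb: "range E \<subseteq> sets borel" by (auto simp: E_def Db sets.Diff)
  have tp: "\<And>j. 0 < t$j - p$j" using pt by (simp add: vll_def)
  have pu: "\<And>m. vll p (u m)" using tp by (simp add: vll_def u_def)
  have ut: "\<And>m. vle (u m) t"
  proof -
    fix m
    have "(t$j - p$j) / (real m + 1) \<le> t$j - p$j" for j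
      using tp[of j] by (simp add: divide_le_eq)
    then show "vle (u m) t" by (simp add: vle_def u_def algebra_simps)
  qed
  have us: "\<And>m. vle (u m) s" using ut ts by (meson order_trans vle_def)
  have umono: "\<And>m. vle (u (Suc m)) (u m)"
  proof -
    fix m
    have "(t$j - p$j) / (real (Suc m) + 1) \<le> (t$j - p$j) / (real m + 1)" for j
      using tp[of j] by (intro divide_left_mono) auto
    then show "vle (u (Suc m)) (u m)" by (simp add: vle_def u_def)
  qed
  have Csub: "\<And>v. vll p v \<Longrightarrow> C \<subseteq> orth v"
    unfolding C_def orth_def vll_def using le_less_trans by blast
  have Dmono: "\<And>m. D (Suc m) \<subseteq> D m" using orth_mono[OF umono] unfolding D_def by blast
  have Ddec: "decseq D" using Dmono by (simp add: decseq_Suc_iff)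
  have Dout: "\<And>y. y \<in> D 0 \<Longrightarrow> \<exists>m. y \<notin> D m"
  proof -
    fix y assume "y \<in> D 0"
    then obtain j where yj: "p$j < y$j" by (auto simp: D_def C_def not_le)
    have "0 < (y$j - p$j) / (t$j - p$j)" using yj tp[of j] by simp
    then obtain n where n: "inverse (real (Suc n)) < (y$j - p$j) / (t$j - p$j)"
      using reals_Archimedean by blast
    then have "(t$j - p$j) * inverse (real (Suc n)) < y$j - p$j"
      using tp[of j] by (simp add: field_simps)
    then have "(t$j - p$j) / (real n + 1) < y$j - p$j" by (simp add: field_simps)
    then have "\<not> y$j < u n $ j" by (simp add: u_def)
    then show "\<exists>m. y \<notin> D m" by (auto simp: D_def orth_def)
  qed
  have Eunion: "(\<Union>l. E l) = D 0"
  proof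
    show "(\<Union>l. E l) \<subseteq> D 0"
    proof
      fix y assume "y \<in> (\<Union>l. E l)"
      then obtain l where "y \<in> D l" by (auto simp: E_def)
      moreover have "D l \<subseteq> D 0" using Ddec by (simp add: decseq_def)
      ultimately show "y \<in> D 0" by blast
    qed
    show "D 0 \<subseteq> (\<Union>l. E l)"
    proof
      fix y assume y0: "y \<in> D 0"
      define m where "m = (LEAST m. y \<notin> D m)"
      have ym: "y \<notin> D m" using Dout[OF y0] unfolding m_def by (metis LeastI)
      have "m \<noteq> 0"
      proof
        assume "m = 0" then show False using ym y0 by simp
      qed
      then obtain l where ml: "m = Suc l" using not0_implies_Suc by blast
      have "y \<in> D l" using not_less_Least[of l "\<lambda>m. y \<notin> D m"] ml m_def by auto
      then have "y \<in> E l" using ym ml by (simp add: E_def)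
      then show "y \<in> (\<Union>l. E l)" by blast
    qed
  qed
  have Edisj: "disjoint_family E"
    unfolding disjoint_family_on_def
  proof (intro ballI impI)
    fix a b :: nat assume "a \<noteq> b"
    have *: "E a \<inter> E b = {}" if "a < b" for a b
    proof -
      have "D b \<subseteq> D (Suc a)" using Ddec that by (simp add: decseq_def)
      then have "E b \<subseteq> D (Suc a)" by (auto simp: E_def)
      then show ?thesis by (auto simp: E_def)
    qed
    show "E a \<inter> E b = {}"
      using \<open>a \<noteq> b\<close> *[of a b] *[of b a] by (metis Int_commute linorder_neqE_nat)
  qed
  have Dsum: "\<And>m. x (D 0) = sum (x \<circ> E) {..<m} + x (D m)"
  proof -
    fix m show "x (D 0) = sum (x \<circ> E) {..<m} + x (D m)"
    proof (induction m)
      case 0 then show ?case by simp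
    next
      case (Suc m)
      have e: "x (D m) = x (D (Suc m)) + x (E m)"
        using x_mono_eq[OF Dmono Db Db] unfolding E_def .
      have f: "sum (x \<circ> E) {..<Suc m} = sum (x \<circ> E) {..<m} + x (E m)" by simp
      show ?case unfolding f using Suc.IH e by (simp only: ac_simps)
    qed
  qed
  obtain N where N: "\<forall>m\<ge>N. fst (sum (x \<circ> E) {..<m}) = fst (x (D 0))"
    using evfst[OF Eb Edisj] Eunion by auto
  have DN0: "fst (x (D N)) = 0"
  proof -
    have "fst (x (D 0)) = fst (sum (x \<circ> E) {..<N}) + fst (x (D N))"
      using arg_cong[OF Dsum[of N], of fst] by (simp only: fst_add)
    moreover have "fst (sum (x \<circ> E) {..<N}) = fst (x (D 0))" using N by blast
    ultimately show ?thesis by linarith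
  qed
  have xu: "\<And>m. x (orth (u m)) = x C + x (D m)"
    using x_mono_eq[OF Csub[OF pu] Cb borel_orth] unfolding D_def .
  have uT: "\<And>m. u m \<in> Tset k x i" using inT_below[OF sT] pu us unfolding p_def by blast
  have fC: "fst (x C) = i" using uT[of N] xu[of N] DN0 by (simp add: inT)
  have CG: "x C \<in> Gamma k" using xG[OF Cb] .
  show ?thesis
  proof (intro exI conjI)
    show "x C \<in> Mset k i" using CG fC by (simp add: Mset_def)
    show "lex_inf_in (Gamma k) (distrF x ` {u. vll (char_point k x i s) u \<and> vle u s}) (x C)"
      unfolding lex_inf_in_def p_def[symmetric]
    proof (intro conjI ballI impI)
      show "x C \<in> Gamma k" using CG .
      fix a assume "a \<in> distrF x ` {u. vll p u \<and> vle u s}"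
      then obtain v where v: "vll p v" "a = x (orth v)" by (auto simp: distrF_def orth_def)
      show "lexle (x C) a" using v x_mono[OF Csub[OF v(1)] Cb borel_orth] by simp
    next
      fix w assume wG: "w \<in> Gamma k" and wl: "\<forall>a\<in>distrF x ` {u. vll p u \<and> vle u s}. lexle w a"
      have wu: "\<And>m. lexle w (x C + x (D m))"
      proof -
        fix m
        have "distrF x (u m) \<in> distrF x ` {u. vll p u \<and> vle u s}" using pu us by blast
        then have "lexle w (distrF x (u m))" using wl by blast
        moreover have "distrF x (u m) = x (orth (u m))" by (simp add: distrF_def orth_def)
        ultimately show "lexle w (x C + x (D m))" using xu by simp
      qed
      define v where "v = x C + x (D 0) - w"
      have Pv: "lexle (sum (x \<circ> E) {..<m}) v" for m
      proof -
        have "lexle (sum (x \<circ> E) {..<m}) (x C + (sum (x \<circ> E) {..<m} + x (D m)) - w)"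
          by (rule L1[OF wu])
        then show ?thesis unfolding v_def by (simp only: Dsum[of m, symmetric])
      qed
      have w0: "lexle 0 w" using wG by (simp add: Gamma_def zero_prod_def)
      have vG: "v \<in> Gamma k"
      proof -
        have "lexle (0,0) v" using Pv[of 0] by (simp add: zero_prod_def)
        moreover have "lexle v (k,0)"
        proof -
          have "lexle v (x C + x (D 0))" unfolding v_def using L2[OF w0] .
          moreover have "lexle (x C + x (D 0)) (k,0)" using xu[of 0] xle[OF borel_orth[of "u 0"]] by simp
          ultimately show ?thesis using lexle_trans by blast
        qed
        ultimately show ?thesis by (simp add: Gamma_def)
      qed
      have si: "M_sum_is k (x \<circ> E) (x (D 0))" using ctbl[OF Eb Edisj] Eunion by simp
      have nnE: "\<And>l. lexle 0 ((x \<circ> E) l)" using Eb xnn by auto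
      have "lexle (x (D 0)) v"
      proof -
        have "\<forall>a\<in>{psum (x \<circ> E) F | F. finite F}. lexle a v"
        proof
          fix a assume "a \<in> {psum (x \<circ> E) F | F. finite F}"
          then obtain F where F: "finite F" "a = sum (x \<circ> E) F" by (auto simp: psum_eq)
          then obtain m where "F \<subseteq> {..<m}" using finite_nat_bounded by blast
          then have "lexle a (sum (x \<circ> E) {..<m})" using F nnE by (simp add: lexle_sum_mono)
          then show "lexle a v" using Pv lexle_trans by blast
        qed
        then show ?thesis using si vG by (simp add: M_sum_is_def lex_sup_in_def)
      qed
      then show "lexle w (x C)" unfolding v_def using L3 by blast
    qed
  qed
qed

end


theorem lemma4p2:
  fixes k i :: int
    and x :: "(real^'n) set \<Rightarrow> int \<times> 'g::lattice_ab_group_add"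
    and s t :: "real^'n"
  assumes "k \<ge> 1"
    and "dedekind_sigma_complete TYPE('g)"
    and "observable k x"
    and "1 \<le> i" and "i \<le> k"
    and "s \<in> Tset k x i"
    and "vll (char_point k x i s) t" and "vle t s"
  shows "t \<in> Tset k x i \<and> approx_i k x i t s \<and>
         is_vinf {u. vll (char_point k x i s) u \<and> vle u s} (char_point k x i s) \<and>
         (\<exists>m. lex_inf_in (Gamma k) (distrF x ` {u. vll (char_point k x i s) u \<and> vle u s}) m
              \<and> m \<in> Mset k i)"
proof -
  interpret obsv k x by unfold_locales (rule assms(3))
  have tT: "t \<in> Tset k x i" by (rule inT_below[OF assms(6,7,8)])
  have cp: "char_point k x i t = char_point k x i s" by (rule approx_part[OF assms(6,7,8)])
  show ?thesis using tT cp assms(6) vinf_part[OF assms(7,8)] inf_part[OF assms(6,7,8)]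
    by (simp add: approx_i_def)
qed

end
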